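(* Let $k\ge 2$, positive integers $n_1,\dots,n_k$, and functions $f_{ij}:\mathbb{R}^{n_j}\to\mathbb{R}^{n_i}$ ($1\le j<i\le k$) be given, and let $\chi_i^*$ ($i=1,\dots,k-1$) be defined by $$\chi_i^*(\nu_{i:k})=\sup_{z_i\in\mathbb{R}^{n_i}}\Big(\nu_i^T z_i+\sum_{j=i+1}^{k}\nu_j^T f_{ji}(z_i)\Big).$$ Let $\|\cdot\|$ be a norm on $\mathbb{R}^{n_1}$ with dual norm $\|\cdot\|_*$, let $x\in\mathbb{R}^{n_1}$, $\epsilon>0$, $\mathcal B(x)=\{x+\Delta:\|\Delta\|\le\epsilon\}$, and $c\in\mathbb{R}^{n_k}$. Suppose that for each $i=1,\dots,k-1$ we are given functions $g_{ij}:\mathbb{R}^{n_j}\to\mathbb{R}^{n_i}$ for $j=i+1,\dots,k$ and a function $h_i:\mathbb{R}^{n_i}\times\cdots\times\mathbb{R}^{n_k}\to\mathbb{R}$ such that for every $\nu_{i+1:k}$, setting $\nu_i=\sum_{j=i+1}^k g_{ij}(\nu_j)$, we have $$\chi_i^*(-\nu_i,\nu_{i+1:k})\le h_i(\nu_{i:k}).$$ Define $\nu_{1:k}$ (the "dual network" applied to $c$) by $\nu_k=-c$ and $\nu_i=\sum_{j=i+1}^{k} g_{ij}(\nu_j)$ for $i=k-1,\dots,1$, and let $$J(x,\nu_{1:k})=-\nu_1^T x-\epsilon\|\nu_1\|_*-\sum_{i=1}^{k-1}h_i(\nu_{i:k}).$$ Then $J(x,\nu_{1:k})$ is a lower bound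 on the value of the problem $$\min\; c^T z_k\quad\text{subject to}\quad z_i=\sum_{j=1}^{i-1}f_{ij}(z_j)\ (i=2,\dots,k),\quad z_1\in\mathcal B(x);$$ that is, $c^T z_k\ge J(x,\nu_{1:k})$ for every feasible $z_{1:k}$.
   Context: Notation: $(\cdot)_{a:b}$ denotes the tuple $((\cdot)_a,\dots,(\cdot)_b)$. The constraints $z_i=\sum_{j<i}f_{ij}(z_j)$ describe a generalized $k$-layer network with arbitrary skip connections and output $z_k$; in the adversarial application $c=e_{y^\star}-e_{y^{\mathrm{targ}}}$ for a true label $y^\star$ and a target label $y^{\mathrm{targ}}$. The dual norm is $\|v\|_*=\sup_{\|\Delta\|\le 1}v^T\Delta$. *)

theory Defs
  imports "HOL-Analysis.Analysis"
begin

text \<open>Vectors of R^n are represented as functions nat => real vanishing from index n on.\<close>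
definition Vec :: "nat \<Rightarrow> (nat \<Rightarrow> real) set" where
  "Vec n = {v. \<forall>m\<ge>n. v m = 0}"

definition ip :: "nat \<Rightarrow> (nat \<Rightarrow> real) \<Rightarrow> (nat \<Rightarrow> real) \<Rightarrow> real" where
  "ip n u v = (\<Sum>m<n. u m * v m)"

definition is_norm_on :: "nat \<Rightarrow> ((nat \<Rightarrow> real) \<Rightarrow> real) \<Rightarrow> bool" where
  "is_norm_on n N \<longleftrightarrow>
     (\<forall>v\<in>Vec n. N v \<ge> 0 \<and> (N v = 0 \<longleftrightarrow> v = (\<lambda>_. 0))) \<and>
     (\<forall>v\<in>Vec n. \<forall>a. N (\<lambda>m. a * v m) = \<bar>a\<bar> * N v) \<and>
     (\<forall>u\<in>Vec n. \<forall>v\<in>Vec n. N (\<lambda>m. u m + v m) \<le> N u + N v)"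

definition dual_norm :: "nat \<Rightarrow> ((nat \<Rightarrow> real) \<Rightarrow> real) \<Rightarrow> (nat \<Rightarrow> real) \<Rightarrow> real" where
  "dual_norm n N v = Sup {ip n v d | d. d \<in> Vec n \<and> N d \<le> 1}"

definition chi_star ::
  "(nat \<Rightarrow> nat) \<Rightarrow> (nat \<Rightarrow> nat \<Rightarrow> (nat \<Rightarrow> real) \<Rightarrow> (nat \<Rightarrow> real)) \<Rightarrow> nat \<Rightarrow> nat
   \<Rightarrow> (nat \<Rightarrow> nat \<Rightarrow> real) \<Rightarrow> ereal" where
  "chi_star n f k i \<nu> =
     (SUP z\<in>Vec (n i). ereal (ip (n i) (\<nu> i) z + (\<Sum>j\<in>{i+1..k}. ip (n j) (\<nu> j) (f j i z))))"

text \<open>Restriction of a tuple to the components i..k (others set to 0), so h_i sees only nu_{i:k}.\<close>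
definition restr :: "nat \<Rightarrow> nat \<Rightarrow> (nat \<Rightarrow> nat \<Rightarrow> real) \<Rightarrow> (nat \<Rightarrow> nat \<Rightarrow> real)" where
  "restr i k \<nu> = (\<lambda>j. if i \<le> j \<and> j \<le> k then \<nu> j else (\<lambda>_. 0))"

end

theory Submission
  imports Defs
begin

lemma subseq_coords:
  fixes s :: "nat \<Rightarrow> nat \<Rightarrow> real"
  assumes B: "\<And>j m. \<bar>s j m\<bar> \<le> B"
  shows "\<exists>r l. strict_mono r \<and> (\<forall>m<p. (\<lambda>j. s (r j) m) \<longlonglongrightarrow> l m)"
proof (induction p)
  case 0 show ?case by (rule exI[of _ id], auto simp: strict_mono_def)
next
  case (Suc p)
  then obtain r l where r: "strict_mono r" and l: "\<forall>m<p. (\<lambda>j. s (r j) m) \<longlonglongrightarrow> l m" by blast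
  have "bounded (range (\<lambda>j. s (r j) p))"
    using B by (auto simp: bounded_iff intro!: exI[of _ B])
  then obtain l' r' where r': "strict_mono r'" and l': "((\<lambda>j. s (r j) p) \<circ> r') \<longlonglongrightarrow> l'"
    using bounded_imp_convergent_subsequence by blast
  have "strict_mono (r \<circ> r')" using r r' by (simp add: strict_mono_def)
  moreover have "\<forall>m<Suc p. (\<lambda>j. s ((r \<circ> r') j) m) \<longlonglongrightarrow> (l(p := l')) m"
  proof (intro allI impI)
    fix m assume m: "m < Suc p"
    show "(\<lambda>j. s ((r \<circ> r') j) m) \<longlonglongrightarrow> (l(p := l')) m"
    proof (cases "m = p")
      case True thus ?thesis using l' by (simp add: o_def)
    next
      case False
      with m have "(\<lambda>j. s (r j) m) \<longlonglongrightarrow> l m" using l by auto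
      from LIMSEQ_subseq_LIMSEQ[OF this r'] False show ?thesis by (simp add: o_def)
    qed
  qed
  ultimately show ?case by blast
qed

definition unitv :: "nat \<Rightarrow> nat \<Rightarrow> real" where "unitv m = (\<lambda>i. if i = m then 1 else 0)"

lemma Vec_sum: "(\<And>i. i \<in> A \<Longrightarrow> F i \<in> Vec n) \<Longrightarrow> (\<lambda>m. \<Sum>i\<in>A. F i m) \<in> Vec n"
  by (auto simp: Vec_def)

lemma norm_upper:
  assumes N: "is_norm_on n N" and d: "d \<in> Vec n"
  shows "N d \<le> (\<Sum>m<n. \<bar>d m\<bar> * N (unitv m))"
proof -
  have tr: "p \<le> n \<Longrightarrow> N (\<lambda>i. if i < p then d i else 0) \<le> (\<Sum>m<p. \<bar>d m\<bar> * N (unitv m))" for p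
  proof (induction p)
    case 0
    have "(\<lambda>i. (0::real)) \<in> Vec n" by (simp add: Vec_def)
    hence "N (\<lambda>i. 0) = 0" using N unfolding is_norm_on_def by blast
    thus ?case by simp
  next
    case (Suc p)
    have u: "unitv p \<in> Vec n" using Suc.prems by (auto simp: Vec_def unitv_def)
    have a: "(\<lambda>i. if i < p then d i else 0) \<in> Vec n" using Suc.prems by (auto simp: Vec_def)
    have b: "(\<lambda>m. d p * unitv p m) \<in> Vec n" using u by (auto simp: Vec_def)
    define A where "A = (\<lambda>i. if i < p then d i else (0::real))"
    define B where "B = (\<lambda>m. d p * unitv p m)"
    have tri: "\<forall>u\<in>Vec n. \<forall>v\<in>Vec n. N (\<lambda>m. u m + v m) \<le> N u + N v" using N unfolding is_norm_on_def by blast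
    have eq: "(\<lambda>i. if i < Suc p then d i else 0) = (\<lambda>m. A m + B m)"
      by (auto simp: A_def B_def unitv_def fun_eq_iff less_Suc_eq)
    have "N (\<lambda>i. if i < Suc p then d i else 0) \<le> N (\<lambda>i. if i < p then d i else 0) + N (\<lambda>m. d p * unitv p m)"
      unfolding eq using tri a b unfolding A_def[symmetric] B_def[symmetric] by blast
    also have "N (\<lambda>m. d p * unitv p m) = \<bar>d p\<bar> * N (unitv p)" using N u unfolding is_norm_on_def by blast
    finally show ?case using Suc by simp
  qed
  have "(\<lambda>i. if i < n then d i else 0) = d" using d by (auto simp: Vec_def)
  with tr[of n] show ?thesis by simp
qed

lemma norm_lower:
  assumes N: "is_norm_on n N"
  shows "\<exists>\<alpha>>0. \<forall>d\<in>Vec n. \<alpha> * (\<Sum>m<n. \<bar>d m\<bar>) \<le> N d"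
proof (rule ccontr)
  assume H: "\<not> ?thesis"
  have "\<exists>e. e \<in> Vec n \<and> (\<Sum>m<n. \<bar>e m\<bar>) = 1 \<and> N e < 1 / (real j + 1)" for j
  proof -
    have "\<not> (\<forall>d\<in>Vec n. (1 / (real j + 1)) * (\<Sum>m<n. \<bar>d m\<bar>) \<le> N d)"
    proof
      assume "\<forall>d\<in>Vec n. (1 / (real j + 1)) * (\<Sum>m<n. \<bar>d m\<bar>) \<le> N d"
      moreover have "(1 / (real j + 1)) > (0::real)" by simp
      ultimately show False using H by blast
    qed
    then obtain d where d: "d \<in> Vec n" and lt: "N d < (1 / (real j + 1)) * (\<Sum>m<n. \<bar>d m\<bar>)" by force
    define S where "S = (\<Sum>m<n. \<bar>d m\<bar>)"
    have "N d \<ge> 0" using N d unfolding is_norm_on_def by blast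
    with lt have "(1 / (real j + 1)) * S > 0" unfolding S_def by linarith
    moreover have "real j + 1 > 0" by simp
    ultimately have Sp: "S > 0" by (auto simp: zero_less_divide_iff)
    define e where "e = (\<lambda>m. (1/S) * d m)"
    have "e \<in> Vec n" using d by (auto simp: Vec_def e_def)
    moreover have "(\<Sum>m<n. \<bar>e m\<bar>) = 1"
    proof -
      have "(\<Sum>m<n. \<bar>e m\<bar>) = (\<Sum>m<n. \<bar>d m\<bar>) / S" using Sp by (simp add: e_def abs_mult sum_divide_distrib)
      thus ?thesis using Sp by (simp add: S_def)
    qed
    moreover have "N e = (1/S) * N d"
    proof -
      have hom: "\<forall>v\<in>Vec n. \<forall>a. N (\<lambda>m. a * v m) = \<bar>a\<bar> * N v" using N unfolding is_norm_on_def by blast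
      have "N e = \<bar>1/S\<bar> * N d" using hom d unfolding e_def by blast
      thus ?thesis using Sp by simp
    qed
    moreover have "(1/S) * N d < 1 / (real j + 1)"
      using lt Sp unfolding S_def[symmetric] by (simp add: field_simps)
    ultimately show ?thesis by auto
  qed
  then obtain e where e: "\<And>j. e j \<in> Vec n" "\<And>j. (\<Sum>m<n. \<bar>e j m\<bar>) = 1" "\<And>j. N (e j) < 1 / (real j + 1)"
    by metis
  have bd: "\<bar>e j m\<bar> \<le> 1" for j m
  proof (cases "m < n")
    case True
    have "\<bar>e j m\<bar> \<le> (\<Sum>m<n. \<bar>e j m\<bar>)"
      using True by (intro member_le_sum) auto
    thus ?thesis using e(2) by simp
  next
    case False thus ?thesis using e(1) by (simp add: Vec_def)
  qed
  obtain r l where r: "strict_mono r" and l: "\<forall>m<n. (\<lambda>j. e (r j) m) \<longlonglongrightarrow> l m"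
    using subseq_coords[of e 1 n] bd by blast
  define L where "L = (\<lambda>m. if m < n then l m else 0)"
  have LV: "L \<in> Vec n" by (simp add: L_def Vec_def)
  have "(\<lambda>j. \<Sum>m<n. \<bar>e (r j) m\<bar>) \<longlonglongrightarrow> (\<Sum>m<n. \<bar>L m\<bar>)"
    using l by (auto intro!: tendsto_intros simp: L_def)
  hence "(\<Sum>m<n. \<bar>L m\<bar>) = 1" using e(2) by (simp add: LIMSEQ_const_iff)
  hence "L \<noteq> (\<lambda>_. 0)" by auto
  moreover have "0 \<le> N L \<and> (N L = 0) = (L = (\<lambda>_. 0))" using N LV unfolding is_norm_on_def by blast
  ultimately have Lpos: "N L > 0" by auto
  have le: "N L \<le> 1 / (real (r j) + 1) + (\<Sum>m<n. \<bar>L m - e (r j) m\<bar> * N (unitv m))" for j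
  proof -
    have D: "(\<lambda>m. L m - e (r j) m) \<in> Vec n" using LV e(1) by (auto simp: Vec_def)
    have "L = (\<lambda>m. e (r j) m + (\<lambda>m. L m - e (r j) m) m)" by auto
    hence "N L \<le> N (e (r j)) + N (\<lambda>m. L m - e (r j) m)"
      using N D e(1) unfolding is_norm_on_def by metis
    also have "\<dots> \<le> 1 / (real (r j) + 1) + (\<Sum>m<n. \<bar>L m - e (r j) m\<bar> * N (unitv m))"
      using e(3)[of "r j"] norm_upper[OF N D] by simp
    finally show ?thesis .
  qed
  have t1: "(\<lambda>j. 1 / (real (r j) + 1)) \<longlonglongrightarrow> 0"
  proof -
    have "(\<lambda>j. 1 / (real j + 1)) \<longlonglongrightarrow> (0::real)"
      using LIMSEQ_inverse_real_of_nat by (simp add: inverse_eq_divide add.commute)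
    from LIMSEQ_subseq_LIMSEQ[OF this r] show ?thesis by (simp add: o_def)
  qed
  have t2: "(\<lambda>j. \<Sum>m<n. \<bar>L m - e (r j) m\<bar> * N (unitv m)) \<longlonglongrightarrow> (\<Sum>m<n. \<bar>L m - L m\<bar> * N (unitv m))"
  proof (rule tendsto_sum)
    fix m assume "m \<in> {..<n}"
    hence lm: "(\<lambda>j. e (r j) m) \<longlonglongrightarrow> L m" using l by (simp add: L_def)
    show "(\<lambda>j. \<bar>L m - e (r j) m\<bar> * N (unitv m)) \<longlonglongrightarrow> \<bar>L m - L m\<bar> * N (unitv m)"
      by (intro tendsto_intros lm)
  qed
  have "(\<lambda>j. 1 / (real (r j) + 1) + (\<Sum>m<n. \<bar>L m - e (r j) m\<bar> * N (unitv m))) \<longlonglongrightarrow> 0"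
    using tendsto_add[OF t1 t2] by simp
  hence "N L \<le> 0" using le by (intro LIMSEQ_le_const) auto
  with Lpos show False by simp
qed

lemma dual_bound:
  assumes N: "is_norm_on n N" and d: "d \<in> Vec n" and Nd: "N d \<le> 1"
  shows "ip n v d \<le> dual_norm n N v"
proof -
  obtain \<alpha> where a: "\<alpha> > 0" "\<forall>d\<in>Vec n. \<alpha> * (\<Sum>m<n. \<bar>d m\<bar>) \<le> N d" using norm_lower[OF N] by blast
  have "bdd_above {ip n v d | d. d \<in> Vec n \<and> N d \<le> 1}"
  proof (rule bdd_aboveI)
    fix y assume "y \<in> {ip n v d | d. d \<in> Vec n \<and> N d \<le> 1}"
    then obtain d where d: "d \<in> Vec n" "N d \<le> 1" and y: "y = ip n v d" by blast
    have "\<alpha> * (\<Sum>m<n. \<bar>d m\<bar>) \<le> 1" using a d by (meson order_trans)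
    hence s: "(\<Sum>m<n. \<bar>d m\<bar>) \<le> 1/\<alpha>" using a by (simp add: pos_le_divide_eq mult.commute)
    have "y \<le> (\<Sum>m<n. \<bar>v m\<bar> * \<bar>d m\<bar>)" unfolding y ip_def
      by (rule sum_mono) (metis abs_ge_self abs_mult)
    also have "\<dots> \<le> (\<Sum>m<n. \<bar>v m\<bar> * (1/\<alpha>))"
    proof (rule sum_mono)
      fix m assume m: "m \<in> {..<n}"
      have "\<bar>d m\<bar> \<le> (\<Sum>m<n. \<bar>d m\<bar>)" using m by (intro member_le_sum) auto
      thus "\<bar>v m\<bar> * \<bar>d m\<bar> \<le> \<bar>v m\<bar> * (1/\<alpha>)" using s by (intro mult_left_mono) auto
    qed
    finally show "y \<le> (\<Sum>m<n. \<bar>v m\<bar> * (1/\<alpha>))" .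
  qed
  thus ?thesis unfolding dual_norm_def using d Nd by (intro cSup_upper) auto
qed

theorem theorem1:
  fixes k :: nat and n :: "nat \<Rightarrow> nat"
    and f g :: "nat \<Rightarrow> nat \<Rightarrow> (nat \<Rightarrow> real) \<Rightarrow> (nat \<Rightarrow> real)"
    and h :: "nat \<Rightarrow> (nat \<Rightarrow> nat \<Rightarrow> real) \<Rightarrow> real"
    and N :: "(nat \<Rightarrow> real) \<Rightarrow> real"
    and x c :: "nat \<Rightarrow> real" and \<epsilon> :: real
    and \<nu> z :: "nat \<Rightarrow> nat \<Rightarrow> real"
  assumes k2: "k \<ge> 2"
    and npos: "\<forall>i\<in>{1..k}. n i > 0"
    and f_maps: "\<forall>i j. 1 \<le> j \<and> j < i \<and> i \<le> k \<longrightarrow> (\<forall>v\<in>Vec (n j). f i j v \<in> Vec (n i))"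
    and g_maps: "\<forall>i j. 1 \<le> i \<and> i < j \<and> j \<le> k \<longrightarrow> (\<forall>v\<in>Vec (n j). g i j v \<in> Vec (n i))"
    and hbound: "\<forall>i\<in>{1..k-1}. \<forall>\<mu>.
        (\<forall>j\<in>{i+1..k}. \<mu> j \<in> Vec (n j)) \<longrightarrow>
        \<mu> i = (\<lambda>m. \<Sum>j\<in>{i+1..k}. g i j (\<mu> j) m) \<longrightarrow>
        chi_star n f k i (\<mu>(i := (\<lambda>m. - \<mu> i m))) \<le> ereal (h i (restr i k \<mu>))"
    and norm: "is_norm_on (n 1) N"
    and x: "x \<in> Vec (n 1)" and eps: "\<epsilon> > 0" and c: "c \<in> Vec (n k)"
    and nu_k: "\<nu> k = (\<lambda>m. - c m)"
    and nu_i: "\<forall>i\<in>{1..k-1}. \<nu> i = (\<lambda>m. \<Sum>j\<in>{i+1..k}. g i j (\<nu> j) m)"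
    and z1: "z 1 \<in> Vec (n 1)" and z1ball: "N (\<lambda>m. z 1 m - x m) \<le> \<epsilon>"
    and zi: "\<forall>i\<in>{2..k}. z i = (\<lambda>m. \<Sum>j\<in>{1..i-1}. f i j (z j) m)"
  shows "ip (n k) c (z k) \<ge>
           - ip (n 1) (\<nu> 1) x - \<epsilon> * dual_norm (n 1) N (\<nu> 1)
           - (\<Sum>i\<in>{1..k-1}. h i (restr i k \<nu>))"
proof -
  have nuV: "\<And>j. 1 \<le> j \<Longrightarrow> j \<le> k \<Longrightarrow> \<nu> j \<in> Vec (n j)"
  proof -
    fix j show "1 \<le> j \<Longrightarrow> j \<le> k \<Longrightarrow> \<nu> j \<in> Vec (n j)"
    proof (induction "k - j" arbitrary: j rule: less_induct)
      case less
      show ?case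
      proof (cases "j = k")
        case True thus ?thesis using c nu_k by (simp add: Vec_def)
      next
        case False
        hence jk: "j \<in> {1..k-1}" using less.prems by auto
        have "(\<lambda>m. \<Sum>i\<in>{j+1..k}. g j i (\<nu> i) m) \<in> Vec (n j)"
        proof (rule Vec_sum)
          fix i assume i: "i \<in> {j+1..k}"
          hence "\<nu> i \<in> Vec (n i)" using less.hyps[of i] less.prems by auto
          thus "g j i (\<nu> i) \<in> Vec (n j)" using g_maps i less.prems by auto
        qed
        thus ?thesis using nu_i jk by auto
      qed
    qed
  qed
  have zV: "\<And>j. 1 \<le> j \<Longrightarrow> j \<le> k \<Longrightarrow> z j \<in> Vec (n j)"
  proof -
    fix j show "1 \<le> j \<Longrightarrow> j \<le> k \<Longrightarrow> z j \<in> Vec (n j)"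
    proof (induction j rule: less_induct)
      case (less j)
      show ?case
      proof (cases "j = 1")
        case True thus ?thesis using z1 by simp
      next
        case False
        hence jk: "j \<in> {2..k}" using less.prems by auto
        have "(\<lambda>m. \<Sum>i\<in>{1..j-1}. f j i (z i) m) \<in> Vec (n j)"
        proof (rule Vec_sum)
          fix i assume i: "i \<in> {1..j-1}"
          hence "z i \<in> Vec (n i)" using less.IH[of i] less.prems by auto
          thus "f j i (z i) \<in> Vec (n j)" using f_maps i less.prems jk by auto
        qed
        thus ?thesis using zi jk by auto
      qed
    qed
  qed
  have ip_sum: "\<And>q v A F. ip q v (\<lambda>m. \<Sum>i\<in>A. F i m) = (\<Sum>i\<in>A. ip q v (F i))"
    unfolding ip_def sum_distrib_left by (rule sum.swap)
  have step: "- ip (n i) (\<nu> i) (z i) + (\<Sum>j\<in>{i+1..k}. ip (n j) (\<nu> j) (f j i (z i))) \<le> h i (restr i k \<nu>)"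
    if i: "i \<in> {1..k-1}" for i
  proof -
    have C: "chi_star n f k i (\<nu>(i := (\<lambda>m. - \<nu> i m))) \<le> ereal (h i (restr i k \<nu>))"
    proof -
      have A: "\<forall>j\<in>{i+1..k}. \<nu> j \<in> Vec (n j)" using nuV i by auto
      have B: "\<nu> i = (\<lambda>m. \<Sum>j\<in>{i+1..k}. g i j (\<nu> j) m)" using nu_i i by blast
      show ?thesis using hbound i A B by blast
    qed
    have zi': "z i \<in> Vec (n i)" using zV i by auto
    have U: "ereal (ip (n i) ((\<nu>(i := (\<lambda>m. - \<nu> i m))) i) (z i)
        + (\<Sum>j\<in>{i+1..k}. ip (n j) ((\<nu>(i := (\<lambda>m. - \<nu> i m))) j) (f j i (z i))))
        \<le> chi_star n f k i (\<nu>(i := (\<lambda>m. - \<nu> i m)))"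
      unfolding chi_star_def by (rule SUP_upper[OF zi'])
    have E1: "ip (n i) ((\<nu>(i := (\<lambda>m. - \<nu> i m))) i) (z i) = - ip (n i) (\<nu> i) (z i)"
      by (simp add: ip_def sum_negf)
    have E2: "(\<Sum>j\<in>{i+1..k}. ip (n j) ((\<nu>(i := (\<lambda>m. - \<nu> i m))) j) (f j i (z i)))
        = (\<Sum>j\<in>{i+1..k}. ip (n j) (\<nu> j) (f j i (z i)))"
    proof (rule sum.cong[OF refl])
      fix j assume "j \<in> {i+1..k}"
      hence "j \<noteq> i" by auto
      thus "ip (n j) ((\<nu>(i := (\<lambda>m. - \<nu> i m))) j) (f j i (z i)) = ip (n j) (\<nu> j) (f j i (z i))" by simp
    qed
    have "ereal (- ip (n i) (\<nu> i) (z i) + (\<Sum>j\<in>{i+1..k}. ip (n j) (\<nu> j) (f j i (z i)))) \<le> ereal (h i (restr i k \<nu>))"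
      using U C unfolding E1 E2 by (rule order_trans)
    thus ?thesis by simp
  qed
  define F where "F i j = ip (n j) (\<nu> j) (f j i (z i))" for i j
  have S: "(\<Sum>i\<in>{1..k-1}. - ip (n i) (\<nu> i) (z i)) + (\<Sum>i\<in>{1..k-1}. \<Sum>j\<in>{i+1..k}. F i j)
      \<le> (\<Sum>i\<in>{1..k-1}. h i (restr i k \<nu>))"
    unfolding sum.distrib[symmetric] F_def by (intro sum_mono step)
  have swap: "(\<Sum>i\<in>{1..k-1}. \<Sum>j\<in>{i+1..k}. F i j) = (\<Sum>j\<in>{2..k}. \<Sum>i\<in>{1..j-1}. F i j)"
  proof -
    have "(\<Sum>i\<in>{1..k-1}. \<Sum>j\<in>{i+1..k}. F i j) = (\<Sum>i\<in>{1..k-1}. \<Sum>j\<in>{j. j \<in> {2..k} \<and> i < j}. F i j)"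
    proof (rule sum.cong[OF refl])
      fix i assume "i \<in> {1..k-1}"
      hence "{i+1..k} = {j. j \<in> {2..k} \<and> i < j}" by auto
      thus "(\<Sum>j\<in>{i+1..k}. F i j) = (\<Sum>j\<in>{j. j \<in> {2..k} \<and> i < j}. F i j)" by simp
    qed
    also have "\<dots> = (\<Sum>j\<in>{2..k}. \<Sum>i\<in>{i. i \<in> {1..k-1} \<and> i < j}. F i j)"
      by (rule sum.swap_restrict) auto
    also have "\<dots> = (\<Sum>j\<in>{2..k}. \<Sum>i\<in>{1..j-1}. F i j)"
    proof (rule sum.cong[OF refl])
      fix j assume "j \<in> {2..k}"
      hence "{i. i \<in> {1..k-1} \<and> i < j} = {1..j-1}" by auto
      thus "(\<Sum>i\<in>{i. i \<in> {1..k-1} \<and> i < j}. F i j) = (\<Sum>i\<in>{1..j-1}. F i j)" by simp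
    qed
    finally show ?thesis .
  qed
  have zsum: "(\<Sum>i\<in>{1..j-1}. F i j) = ip (n j) (\<nu> j) (z j)" if j: "j \<in> {2..k}" for j
    using zi j by (simp add: F_def ip_sum)
  have tele1: "(\<Sum>j\<in>{2..k}. ip (n j) (\<nu> j) (z j)) = (\<Sum>j\<in>{2..k-1}. ip (n j) (\<nu> j) (z j)) + ip (n k) (\<nu> k) (z k)"
  proof -
    have "{2..k} = insert k {2..k-1}" using k2 by auto
    thus ?thesis using k2 by simp
  qed
  have tele2: "(\<Sum>i\<in>{1..k-1}. - ip (n i) (\<nu> i) (z i)) = - ip (n 1) (\<nu> 1) (z 1) - (\<Sum>j\<in>{2..k-1}. ip (n j) (\<nu> j) (z j))"
  proof -
    have "{1..k-1} = insert 1 {2..k-1}" using k2 by auto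
    thus ?thesis using k2 by (simp add: sum_negf)
  qed
  have nuk: "ip (n k) (\<nu> k) (z k) = - ip (n k) c (z k)" using nu_k by (simp add: ip_def sum_negf)
  have main: "- ip (n 1) (\<nu> 1) (z 1) - ip (n k) c (z k) \<le> (\<Sum>i\<in>{1..k-1}. h i (restr i k \<nu>))"
  proof -
    have Z: "(\<Sum>j\<in>{2..k}. \<Sum>i\<in>{1..j-1}. F i j) = (\<Sum>j\<in>{2..k}. ip (n j) (\<nu> j) (z j))"
      by (rule sum.cong[OF refl]) (rule zsum)
    show ?thesis using S unfolding swap Z tele1 tele2 nuk by linarith
  qed
  define D where "D = (\<lambda>m. (1/\<epsilon>) * (z 1 m - x m))"
  have DV: "D \<in> Vec (n 1)" using z1 x by (auto simp: Vec_def D_def)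
  have ZV: "(\<lambda>m. z 1 m - x m) \<in> Vec (n 1)" using z1 x by (auto simp: Vec_def)
  have "N D = (1/\<epsilon>) * N (\<lambda>m. z 1 m - x m)"
  proof -
    have hom: "\<forall>v\<in>Vec (n 1). \<forall>a. N (\<lambda>m. a * v m) = \<bar>a\<bar> * N v" using norm unfolding is_norm_on_def by blast
    have "N D = \<bar>1/\<epsilon>\<bar> * N (\<lambda>m. z 1 m - x m)" unfolding D_def by (rule hom[rule_format, OF ZV])
    thus ?thesis using eps by simp
  qed
  also have "\<dots> \<le> 1" using z1ball eps by (simp add: field_simps)
  finally have "ip (n 1) (\<nu> 1) D \<le> dual_norm (n 1) N (\<nu> 1)" using dual_bound[OF norm DV] by simp
  moreover have "ip (n 1) (\<nu> 1) (z 1) = ip (n 1) (\<nu> 1) x + \<epsilon> * ip (n 1) (\<nu> 1) D"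
    using eps by (simp add: ip_def D_def sum_distrib_left sum.distrib[symmetric] algebra_simps)
  ultimately have "ip (n 1) (\<nu> 1) (z 1) \<le> ip (n 1) (\<nu> 1) x + \<epsilon> * dual_norm (n 1) N (\<nu> 1)"
    using eps by (simp add: mult_left_mono)
  with main show ?thesis by linarith
qed

end
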